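(* A pattern $P\in\{0,1\}^{k\times\ell}$ that avoids $D_2$ or avoids $\overline{D}_2$ is row-bounding, i.e., $\mathrm{Av}(P)$ is row-bounded.
   Context: All matrices are binary; rows numbered top to bottom, columns left to right; $(i,j)$ is the entry in row $i$, column $j$; $(a,b]=\{a+1,\dots,b\}$. $D_2\in\{0,1\}^{2\times2}$ has 1-entries exactly at $(1,1),(2,2)$; $\overline D_2$ has 1-entries exactly at $(1,2),(2,1)$. A pattern $P\in\{0,1\}^{k\times\ell}$ is an interval minor of $M\in\{0,1\}^{m\times n}$ if there are integers $0=r_0<\dots<r_k=m$ and $0=c_0<\dots<c_\ell=n$ such that for each 1-entry $(i,j)$ of $P$ the submatrix of $M$ on rows $(r_{i-1},r_i]$ and columns $(c_{j-1},c_j]$ contains a 1-entry; otherwise $M$ avoids $P$. $\mathrm{Av}(P)$ is the set of binary matrices avoiding $P$. $M\in\mathrm{Av}(P)$ is critical if changing any single 0-entry of $M$ to a 1-entry produces a matrix containing $P$. A horizontal 0-run is a maximal set of consecutive 0-entries within one row; the complexity of a row is the number of such runs. $\mathrm{Av}(P)$ is row-bounded (and $P$ row-bounding) if there is a constant bounding the complexity of every row of every critical matrix in $\mathrm{Av}(P)$. *)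

theory Defs
  imports Main
begin

text \<open>A binary matrix with m rows and n columns is represented by its dimensions together
  with a predicate M :: nat => nat => bool, where M i j means that entry (i,j) is a 1-entry.
  Rows are indexed 1..m and columns 1..n; values of M outside this range are irrelevant.\<close>

definition contains :: "nat \<Rightarrow> nat \<Rightarrow> (nat \<Rightarrow> nat \<Rightarrow> bool) \<Rightarrow>
    nat \<Rightarrow> nat \<Rightarrow> (nat \<Rightarrow> nat \<Rightarrow> bool) \<Rightarrow> bool" where
  "contains k l P m n M \<longleftrightarrow>
     (\<exists>r c :: nat \<Rightarrow> nat.
        r 0 = 0 \<and> r k = m \<and> (\<forall>i<k. r i < r (Suc i)) \<and>
        c 0 = 0 \<and> c l = n \<and> (\<forall>j<l. c j < c (Suc j)) \<and>
        (\<forall>i\<in>{1..k}. \<forall>j\<in>{1..l}. P i j \<longrightarrow>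
           (\<exists>a\<in>{r (i - 1)<..r i}. \<exists>b\<in>{c (j - 1)<..c j}. M a b)))"

definition avoids :: "nat \<Rightarrow> nat \<Rightarrow> (nat \<Rightarrow> nat \<Rightarrow> bool) \<Rightarrow>
    nat \<Rightarrow> nat \<Rightarrow> (nat \<Rightarrow> nat \<Rightarrow> bool) \<Rightarrow> bool" where
  "avoids k l P m n M \<longleftrightarrow> \<not> contains k l P m n M"

definition D2 :: "nat \<Rightarrow> nat \<Rightarrow> bool" where
  "D2 i j \<longleftrightarrow> (i = 1 \<and> j = 1) \<or> (i = 2 \<and> j = 2)"

definition D2bar :: "nat \<Rightarrow> nat \<Rightarrow> bool" where
  "D2bar i j \<longleftrightarrow> (i = 1 \<and> j = 2) \<or> (i = 2 \<and> j = 1)"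

definition set_one :: "(nat \<Rightarrow> nat \<Rightarrow> bool) \<Rightarrow> nat \<Rightarrow> nat \<Rightarrow> nat \<Rightarrow> nat \<Rightarrow> bool" where
  "set_one M a b = (\<lambda>i j. if i = a \<and> j = b then True else M i j)"

definition critical :: "nat \<Rightarrow> nat \<Rightarrow> (nat \<Rightarrow> nat \<Rightarrow> bool) \<Rightarrow>
    nat \<Rightarrow> nat \<Rightarrow> (nat \<Rightarrow> nat \<Rightarrow> bool) \<Rightarrow> bool" where
  "critical k l P m n M \<longleftrightarrow> avoids k l P m n M \<and>
     (\<forall>a\<in>{1..m}. \<forall>b\<in>{1..n}. \<not> M a b \<longrightarrow> contains k l P m n (set_one M a b))"

definition zero_runs :: "nat \<Rightarrow> (nat \<Rightarrow> nat \<Rightarrow> bool) \<Rightarrow> nat \<Rightarrow> nat set set" where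
  "zero_runs n M a = {S. \<exists>s t. S = {s..t} \<and> 1 \<le> s \<and> s \<le> t \<and> t \<le> n \<and>
       (\<forall>j\<in>S. \<not> M a j) \<and> (s = 1 \<or> M a (s - 1)) \<and> (t = n \<or> M a (t + 1))}"

definition row_complexity :: "nat \<Rightarrow> (nat \<Rightarrow> nat \<Rightarrow> bool) \<Rightarrow> nat \<Rightarrow> nat" where
  "row_complexity n M a = card (zero_runs n M a)"

definition row_bounding :: "nat \<Rightarrow> nat \<Rightarrow> (nat \<Rightarrow> nat \<Rightarrow> bool) \<Rightarrow> bool" where
  "row_bounding k l P \<longleftrightarrow>
     (\<exists>C::nat. \<forall>m n M. critical k l P m n M \<longrightarrow>
        (\<forall>a\<in>{1..m}. row_complexity n M a \<le> C))"

end

theory Submission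
  imports Defs
begin

definition part :: "nat \<Rightarrow> nat \<Rightarrow> (nat \<Rightarrow> nat) \<Rightarrow> bool" where
  "part k m r \<longleftrightarrow> r 0 = 0 \<and> r k = m \<and> (\<forall>i<k. r i < r (Suc i))"

definition emb :: "nat \<Rightarrow> nat \<Rightarrow> (nat \<Rightarrow> nat \<Rightarrow> bool) \<Rightarrow> nat \<Rightarrow> nat \<Rightarrow> (nat \<Rightarrow> nat \<Rightarrow> bool)
   \<Rightarrow> (nat \<Rightarrow> nat) \<Rightarrow> (nat \<Rightarrow> nat) \<Rightarrow> bool" where
  "emb k l P m n M r c \<longleftrightarrow> part k m r \<and> part l n c \<and>
     (\<forall>i\<in>{1..k}. \<forall>j\<in>{1..l}. P i j \<longrightarrow>
           (\<exists>x\<in>{r (i - 1)<..r i}. \<exists>y\<in>{c (j - 1)<..c j}. M x y))"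

lemma contains_iff: "contains k l P m n M \<longleftrightarrow> (\<exists>r c. emb k l P m n M r c)"
  unfolding contains_def emb_def part_def by blast

lemma part_strict:
  assumes "part k m r" "i < j" "j \<le> k" shows "r i < r j"
  using assms(2,3)
proof (induction j)
  case 0 then show ?case by simp
next
  case (Suc j)
  have s: "r j < r (Suc j)" using assms(1) Suc.prems unfolding part_def by auto
  show ?case
  proof (cases "i = j")
    case True then show ?thesis using s by simp
  next
    case False then have "i < j" using Suc.prems by simp
    then show ?thesis using Suc.IH Suc.prems s by simp
  qed
qed

lemma part_mono:
  assumes "part k m r" "i \<le> j" "j \<le> k" shows "r i \<le> r j"
  using part_strict[OF assms(1), of i j] assms by (cases "i = j") auto

lemma part_uniq:
  assumes "part k m r" "i \<in> {1..k}" "i' \<in> {1..k}"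
    "r (i - 1) < x" "x \<le> r i" "r (i' - 1) < x" "x \<le> r i'"
  shows "i = i'"
proof (rule ccontr)
  assume "i \<noteq> i'"
  then consider "i < i'" | "i' < i" by linarith
  then show False
  proof cases
    case 1
    then have "r i \<le> r (i' - 1)" using part_mono[OF assms(1), of i "i'-1"] assms(3) by auto
    then show False using assms by linarith
  next
    case 2
    then have "r i' \<le> r (i - 1)" using part_mono[OF assms(1), of i' "i-1"] assms(2) by auto
    then show False using assms by linarith
  qed
qed

lemma part_exists:
  assumes "part k m r" "0 < x" "x \<le> m"
  shows "\<exists>i\<in>{1..k}. r (i - 1) < x \<and> x \<le> r i"
proof -
  have ex: "\<exists>i. i \<le> k \<and> x \<le> r i" using assms unfolding part_def by auto
  define i where "i = (LEAST i. i \<le> k \<and> x \<le> r i)"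
  have i1: "i \<le> k \<and> x \<le> r i" unfolding i_def using LeastI_ex[OF ex] .
  have i0: "i \<noteq> 0"
  proof
    assume "i = 0" then show False using i1 assms unfolding part_def by simp
  qed
  have "\<not> (i - 1 \<le> k \<and> x \<le> r (i - 1))"
  proof
    assume "i - 1 \<le> k \<and> x \<le> r (i - 1)"
    then have "i \<le> i - 1" unfolding i_def by (rule Least_le)
    then show False using i0 by simp
  qed
  then have "r (i - 1) < x" using i1 by auto
  then show ?thesis using i1 i0 by auto
qed


lemma transfer:
  assumes e: "emb k l P m n (set_one M a b) r c" and i0: "i0 \<in> {1..k}" and j0: "j0 \<in> {1..l}"
    and ra: "r (i0 - 1) < a" "a \<le> r i0" and cb: "c (j0 - 1) < b" "b \<le> c j0"
    and h: "P i0 j0 \<Longrightarrow> \<exists>x\<in>{r (i0 - 1)<..r i0}. \<exists>y\<in>{c (j0 - 1)<..c j0}. M x y"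
  shows "emb k l P m n M r c"
  unfolding emb_def
proof (intro conjI ballI impI)
  show "part k m r" "part l n c" using e unfolding emb_def by auto
  fix i j assume i: "i \<in> {1..k}" and j: "j \<in> {1..l}" and p: "P i j"
  show "\<exists>x\<in>{r (i - 1)<..r i}. \<exists>y\<in>{c (j - 1)<..c j}. M x y"
  proof (cases "i = i0 \<and> j = j0")
    case True then show ?thesis using h p by auto
  next
    case False
    obtain x y where x: "x \<in> {r (i - 1)<..r i}" and y: "y \<in> {c (j - 1)<..c j}"
      and xy: "set_one M a b x y" using e i j p unfolding emb_def by blast
    have "M x y"
    proof (cases "x = a \<and> y = b")
      case True
      have "i = i0" using part_uniq[of k m r i i0 a] e i i0 ra x True unfolding emb_def by auto
      moreover have "j = j0" using part_uniq[of l n c j j0 b] e j j0 cb y True unfolding emb_def by auto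
      ultimately show ?thesis using False by simp
    next
      case False then show ?thesis using xy unfolding set_one_def by auto
    qed
    then show ?thesis using x y by blast
  qed
qed

lemma flip_cell:
  assumes cr: "critical k l P m n M" and a: "a \<in> {1..m}" and b: "b \<in> {1..n}" and z: "\<not> M a b"
  shows "\<exists>r c i0 j0. emb k l P m n (set_one M a b) r c \<and> i0 \<in> {1..k} \<and> j0 \<in> {1..l} \<and>
     r (i0 - 1) < a \<and> a \<le> r i0 \<and> c (j0 - 1) < b \<and> b \<le> c j0 \<and> P i0 j0 \<and>
     (\<forall>y. M a y \<longrightarrow> \<not> (c (j0 - 1) < y \<and> y \<le> c j0))"
proof -
  have av: "\<not> contains k l P m n M" using cr unfolding critical_def avoids_def by auto
  have "contains k l P m n (set_one M a b)" using cr a b z unfolding critical_def by auto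
  then obtain r c where e: "emb k l P m n (set_one M a b) r c" unfolding contains_iff by blast
  obtain i0 where i0: "i0 \<in> {1..k}" "r (i0 - 1) < a" "a \<le> r i0"
    using part_exists[of k m r a] e a unfolding emb_def by auto
  obtain j0 where j0: "j0 \<in> {1..l}" "c (j0 - 1) < b" "b \<le> c j0"
    using part_exists[of l n c b] e b unfolding emb_def by auto
  have p: "P i0 j0"
  proof (rule ccontr)
    assume "\<not> P i0 j0"
    then have "emb k l P m n M r c" using transfer[OF e i0(1) j0(1) i0(2,3) j0(2,3)] by blast
    then show False using av unfolding contains_iff by blast
  qed
  have "\<forall>y. M a y \<longrightarrow> \<not> (c (j0 - 1) < y \<and> y \<le> c j0)"
  proof (intro allI impI notI)
    fix y assume "M a y" "c (j0 - 1) < y \<and> y \<le> c j0"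
    then have "\<exists>x\<in>{r (i0 - 1)<..r i0}. \<exists>y\<in>{c (j0 - 1)<..c j0}. M x y"
      using i0 by (intro bexI[of _ a] bexI[of _ y]) auto
    then have "emb k l P m n M r c" using transfer[OF e i0(1) j0(1) i0(2,3) j0(2,3)] by blast
    then show False using av unfolding contains_iff by blast
  qed
  then show ?thesis using e i0 j0 p by blast
qed


lemma core:
  assumes e1: "emb k l P m n (set_one M a b1) r1 c1" and e2: "emb k l P m n (set_one M a b2) r2 c2"
    and i0: "i0 \<in> {1..k}" and a1: "r1 (i0 - 1) < a" "a \<le> r1 i0"
    and a2: "r2 (i0 - 1) < a" "a \<le> r2 i0"
    and rr: "part k m rr" "rr (i0 - 1) < a" "a \<le> rr i0"
    and H2: "\<forall>i\<in>{1..k}. \<forall>j\<in>{1..l}. P i j \<longrightarrow> i \<noteq> i0 \<longrightarrow>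
        (j \<le> p \<and> rr (i - 1) = r1 (i - 1) \<and> rr i = r1 i) \<or> (q \<le> j \<and> rr (i - 1) = r2 (i - 1) \<and> rr i = r2 i)"
    and H5: "\<forall>j\<in>{1..l}. P i0 j \<longrightarrow> p \<le> j \<and> j \<le> q"
    and pq: "1 \<le> p" "p \<le> q" "q \<le> l"
    and ysm: "\<forall>j. p \<le> j \<longrightarrow> j < q \<longrightarrow> ys j < ys (Suc j)"
    and ysp: "\<forall>j. p \<le> j \<longrightarrow> j \<le> q \<longrightarrow> M a (ys j) \<and> c1 p \<le> ys j \<and> ys j \<le> c2 (q - 1)"
  shows "contains k l P m n M"
proof -
  define cc where "cc j = (if j < p then c1 j else if j < q then ys j else c2 j)" for j
  have pc1: "part l n c1" and pc2: "part l n c2" and pr1: "part k m r1" and pr2: "part k m r2"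
    using e1 e2 unfolding emb_def by auto
  have c1s: "c1 (p - 1) < c1 p" using part_strict[OF pc1, of "p - 1" p] pq by auto
  have c2s: "c2 (q - 1) < c2 q" using part_strict[OF pc2, of "q - 1" q] pq by auto
  have ccp: "c1 p \<le> cc p" using ysp c2s pq unfolding cc_def by force
  have ccq: "cc (q - 1) \<le> c2 (q - 1)"
  proof (cases "q - 1 < p")
    case True then have "q = p" using pq by auto
    then show ?thesis using True ysp c1s pq unfolding cc_def by force
  next
    case False then show ?thesis using ysp pq unfolding cc_def by auto
  qed
  have pcc: "part l n cc" unfolding part_def
  proof (intro conjI allI impI)
    show "cc 0 = 0" using pc1 pq unfolding cc_def part_def by auto
    show "cc l = n" using pc2 pq unfolding cc_def part_def by auto
    fix j assume j: "j < l"
    show "cc j < cc (Suc j)"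
    proof -
      consider "Suc j < p" | "Suc j = p" | "p \<le> j \<and> Suc j < q" | "p \<le> j \<and> Suc j = q" | "q \<le> j"
        by linarith
      then show ?thesis
      proof cases
        case 1 then show ?thesis using pc1 j unfolding part_def cc_def by auto
      next
        case 2 then have "cc j = c1 (p - 1)" unfolding cc_def by auto
        then show ?thesis using ccp c1s 2 by auto
      next
        case 3 then show ?thesis using ysm unfolding cc_def by auto
      next
        case 4 then have "cc j = ys j" "cc (Suc j) = c2 q" unfolding cc_def by auto
        moreover have "ys j \<le> c2 (q - 1)" using ysp 4 by auto
        ultimately show ?thesis using c2s by linarith
      next
        case 5 then show ?thesis using pc2 j pq unfolding part_def cc_def by auto
      qed
    qed
  qed
  have "emb k l P m n M rr cc" unfolding emb_def
  proof (intro conjI ballI impI)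
    show "part k m rr" "part l n cc" using rr pcc by auto
    fix i j assume i: "i \<in> {1..k}" and j: "j \<in> {1..l}" and p: "P i j"
    show "\<exists>x\<in>{rr (i - 1)<..rr i}. \<exists>y\<in>{cc (j - 1)<..cc j}. M x y"
    proof (cases "i = i0")
      case True
      then have jr: "p \<le> j" "j \<le> q" using H5 j p by auto
      have lo: "cc (j - 1) < ys j"
      proof (cases "j = p")
        case True then show ?thesis using ysp c1s jr pq unfolding cc_def by force
      next
        case False then have "cc (j - 1) = ys (j - 1)" using jr unfolding cc_def by auto
        moreover have "ys (j - 1) < ys (Suc (j - 1))" using ysm[rule_format, of "j - 1"] jr False by linarith
        moreover have "Suc (j - 1) = j" using jr False pq by auto
        ultimately show ?thesis by simp
      qed
      have hi: "ys j \<le> cc j"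
      proof (cases "j < q")
        case True then show ?thesis using jr unfolding cc_def by auto
      next
        case False then show ?thesis using ysp jr c2s unfolding cc_def by force
      qed
      show ?thesis using True rr ysp jr lo hi by (intro bexI[of _ a] bexI[of _ "ys j"]) auto
    next
      case False
      then consider "j \<le> p" "rr (i - 1) = r1 (i - 1)" "rr i = r1 i"
        | "q \<le> j" "rr (i - 1) = r2 (i - 1)" "rr i = r2 i" using H2 i j p by blast
      then show ?thesis
      proof cases
        case 1
        obtain x y where x: "x \<in> {r1 (i - 1)<..r1 i}" and y: "y \<in> {c1 (j - 1)<..c1 j}"
          and xy: "set_one M a b1 x y" using e1 i j p unfolding emb_def by blast
        have "x \<noteq> a"
        proof
          assume "x = a"
          then have "i = i0" using part_uniq[OF pr1 i i0, of x] x a1 by auto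
          then show False using False by simp
        qed
        then have "M x y" using xy unfolding set_one_def by auto
        moreover have "cc (j - 1) = c1 (j - 1)" using 1 j pq unfolding cc_def by auto
        moreover have "c1 j \<le> cc j"
        proof (cases "j = p")
          case True then show ?thesis using ccp by simp
        next
          case False then show ?thesis using 1 unfolding cc_def by auto
        qed
        ultimately show ?thesis using x y 1 by (intro bexI[of _ x] bexI[of _ y]) auto
      next
        case 2
        obtain x y where x: "x \<in> {r2 (i - 1)<..r2 i}" and y: "y \<in> {c2 (j - 1)<..c2 j}"
          and xy: "set_one M a b2 x y" using e2 i j p unfolding emb_def by blast
        have "x \<noteq> a"
        proof
          assume "x = a"
          then have "i = i0" using part_uniq[OF pr2 i i0, of x] x a2 by auto
          then show False using False by simp
        qed
        then have "M x y" using xy unfolding set_one_def by auto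
        moreover have "cc j = c2 j" using 2 pq unfolding cc_def by auto
        moreover have "cc (j - 1) \<le> c2 (j - 1)"
        proof (cases "j = q")
          case True then show ?thesis using ccq by simp
        next
          case False then have "\<not> j - 1 < q" "\<not> j - 1 < p" using 2 pq by auto
          then show ?thesis unfolding cc_def by auto
        qed
        ultimately show ?thesis using x y 2 by (intro bexI[of _ x] bexI[of _ y]) auto
      qed
    qed
  qed
  then show ?thesis unfolding contains_iff by blast
qed

lemma D2_of:
  assumes "P i j" "P i' j'" "1 \<le> i" "i < i'" "i' \<le> k" "1 \<le> j" "j < j'" "j' \<le> l"
  shows "contains 2 2 D2 k l P"
  unfolding contains_def
  apply (rule exI[of _ "\<lambda>x. if x = 0 then 0 else if x = 1 then i else k"])
  apply (rule exI[of _ "\<lambda>x. if x = 0 then 0 else if x = 1 then j else l"])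
  using assms apply (auto simp: D2_def)
   apply (rule bexI[of _ i], rule bexI[of _ j], auto)
  apply (rule bexI[of _ i'], rule bexI[of _ j'], auto)
  done
lemma D2bar_of:
  assumes "P i j'" "P i' j" "1 \<le> i" "i < i'" "i' \<le> k" "1 \<le> j" "j < j'" "j' \<le> l"
  shows "contains 2 2 D2bar k l P"
  unfolding contains_def
  apply (rule exI[of _ "\<lambda>x. if x = 0 then 0 else if x = 1 then i else k"])
  apply (rule exI[of _ "\<lambda>x. if x = 0 then 0 else if x = 1 then j else l"])
  using assms apply (auto simp: D2bar_def)
   apply (rule bexI[of _ i], rule bexI[of _ j'], auto)
  apply (rule bexI[of _ i'], rule bexI[of _ j], auto)
  done

lemma ys_exists:
  fixes Y :: "nat set"
  assumes "finite Y" "N \<le> card Y"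
  shows "\<exists>ys. (\<forall>j. p \<le> j \<longrightarrow> Suc j < p + N \<longrightarrow> ys j < ys (Suc j)) \<and> (\<forall>j. p \<le> j \<longrightarrow> j < p + N \<longrightarrow> ys j \<in> Y)"
proof -
  define xs where "xs = sorted_list_of_set Y"
  have s: "sorted_wrt (<) xs" unfolding xs_def using strict_sorted_list_of_set[of Y] by simp
  have l: "length xs = card Y" unfolding xs_def by simp
  have st: "set xs = Y" unfolding xs_def using assms by simp
  show ?thesis
  proof (intro exI[of _ "\<lambda>j. xs ! (j - p)"] conjI allI impI)
    fix j assume "p \<le> j" "Suc j < p + N"
    then show "xs ! (j - p) < xs ! (Suc j - p)"
      using sorted_wrt_nth_less[OF s, of "j - p" "Suc j - p"] l assms by auto
  next
    fix j assume "p \<le> j" "j < p + N"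
    then show "xs ! (j - p) \<in> Y" using st l assms nth_mem[of "j - p" xs] by auto
  qed
qed


lemma pair_contra:
  assumes av: "\<not> contains k l P m n M"
    and dd: "avoids 2 2 D2 k l P \<or> avoids 2 2 D2bar k l P"
    and e1: "emb k l P m n (set_one M a b1) r1 c1" and e2: "emb k l P m n (set_one M a b2) r2 c2"
    and i0: "i0 \<in> {1..k}" and j0: "j0 \<in> {1..l}"
    and a1: "r1 (i0 - 1) < a" "a \<le> r1 i0" and a2: "r2 (i0 - 1) < a" "a \<le> r2 i0"
    and b1: "c1 (j0 - 1) < b1" and b2: "b2 \<le> c2 j0" and pij: "P i0 j0"
    and o1: "\<forall>y. M a y \<longrightarrow> \<not> (c1 (j0 - 1) < y \<and> y \<le> c1 j0)"
    and o2: "\<forall>y. M a y \<longrightarrow> \<not> (c2 (j0 - 1) < y \<and> y \<le> c2 j0)"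
    and Y: "finite Y" "l \<le> card Y" "\<forall>y\<in>Y. M a y \<and> b1 < y \<and> y < b2"
  shows False
proof -
  have pc1: "part l n c1" and pc2: "part l n c2" and pr1: "part k m r1" and pr2: "part k m r2"
    using e1 e2 unfolding emb_def by auto
  define J where "J = {j\<in>{1..l}. P i0 j}"
  have fJ: "finite J" and j0J: "j0 \<in> J" using j0 pij unfolding J_def by auto
  define p where "p = Min J"
  define q where "q = Max J"
  have pJ: "p \<in> J" and qJ: "q \<in> J" unfolding p_def q_def using fJ j0J Min_in Max_in by blast+
  have pj0: "p \<le> j0" and j0q: "j0 \<le> q" unfolding p_def q_def using fJ j0J by auto
  have pq: "1 \<le> p" "p \<le> q" "q \<le> l" using pJ qJ pj0 j0q unfolding J_def by auto
  have H5: "\<forall>j\<in>{1..l}. P i0 j \<longrightarrow> p \<le> j \<and> j \<le> q"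
    unfolding p_def q_def J_def using fJ J_def by auto
  have Pp: "P i0 p" and Pq: "P i0 q" using pJ qJ unfolding J_def by auto
  have "q - p + 1 \<le> card Y" using pq Y by linarith
  then obtain ys where ysm0: "\<forall>j. p \<le> j \<longrightarrow> Suc j < p + (q - p + 1) \<longrightarrow> ys j < ys (Suc j)"
      and ysY: "\<forall>j. p \<le> j \<longrightarrow> j < p + (q - p + 1) \<longrightarrow> ys j \<in> Y"
    using ys_exists[OF Y(1), of "q - p + 1" p] by blast
  have ysm: "\<forall>j. p \<le> j \<longrightarrow> j < q \<longrightarrow> ys j < ys (Suc j)" using ysm0 pq by auto
  have Ylo: "c1 p < y" if "y \<in> Y" for y
  proof -
    have "M a y" "b1 < y" using Y that by auto
    then have "c1 j0 < y" using o1 b1 by auto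
    moreover have "c1 p \<le> c1 j0" using part_mono[OF pc1 pj0] j0 by auto
    ultimately show ?thesis by linarith
  qed
  have Yhi: "y \<le> c2 (q - 1)" if "y \<in> Y" for y
  proof -
    have "M a y" "y < b2" using Y that by auto
    then have "y \<le> c2 (j0 - 1)" using o2 b2 by auto
    moreover have "c2 (j0 - 1) \<le> c2 (q - 1)" using part_mono[OF pc2, of "j0 - 1" "q - 1"] j0q pq by auto
    ultimately show ?thesis by linarith
  qed
  have ysp: "\<forall>j. p \<le> j \<longrightarrow> j \<le> q \<longrightarrow> M a (ys j) \<and> c1 p \<le> ys j \<and> ys j \<le> c2 (q - 1)"
  proof (intro allI impI)
    fix j assume "p \<le> j" "j \<le> q"
    then have "ys j \<in> Y" using ysY pq by auto
    then show "M a (ys j) \<and> c1 p \<le> ys j \<and> ys j \<le> c2 (q - 1)" using Y Ylo Yhi by fastforce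
  qed
  from dd show False
  proof
    assume d: "avoids 2 2 D2 k l P"
    define rr where "rr i = (if i < i0 then r2 i else r1 i)" for i
    have prr: "part k m rr" unfolding part_def
    proof (intro conjI allI impI)
      show "rr 0 = 0" using pr2 i0 unfolding rr_def part_def by auto
      show "rr k = m" using pr1 i0 unfolding rr_def part_def by auto
      fix i assume i: "i < k"
      show "rr i < rr (Suc i)"
      proof -
        consider "Suc i < i0" | "Suc i = i0" | "i0 \<le> i" by linarith
        then show ?thesis
        proof cases
          case 1 then show ?thesis using pr2 i unfolding rr_def part_def by auto
        next
          case 2 then show ?thesis using a1 a2 unfolding rr_def by auto
        next
          case 3 then show ?thesis using pr1 i unfolding rr_def part_def by auto
        qed
      qed
    qed
    have rra: "rr (i0 - 1) < a" "a \<le> rr i0" using a1 a2 i0 unfolding rr_def by auto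
    have H2: "\<forall>i\<in>{1..k}. \<forall>j\<in>{1..l}. P i j \<longrightarrow> i \<noteq> i0 \<longrightarrow>
        (j \<le> p \<and> rr (i - 1) = r1 (i - 1) \<and> rr i = r1 i) \<or> (q \<le> j \<and> rr (i - 1) = r2 (i - 1) \<and> rr i = r2 i)"
    proof (intro ballI impI)
      fix i j assume i: "i \<in> {1..k}" and j: "j \<in> {1..l}" and P: "P i j" and ne: "i \<noteq> i0"
      show "(j \<le> p \<and> rr (i - 1) = r1 (i - 1) \<and> rr i = r1 i) \<or> (q \<le> j \<and> rr (i - 1) = r2 (i - 1) \<and> rr i = r2 i)"
      proof (cases "i < i0")
        case True
        have "q \<le> j"
        proof (rule ccontr)
          assume "\<not> q \<le> j"
          then have "contains 2 2 D2 k l P" using D2_of[of P i j i0 q k l] P Pq True i j i0 pq by auto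
          then show False using d unfolding avoids_def by simp
        qed
        then show ?thesis using True unfolding rr_def by auto
      next
        case False
        then have gt: "i0 < i" using ne by auto
        have "j \<le> p"
        proof (rule ccontr)
          assume "\<not> j \<le> p"
          then have "contains 2 2 D2 k l P" using D2_of[of P i0 p i j k l] P Pp gt i j i0 pq by auto
          then show False using d unfolding avoids_def by simp
        qed
        then show ?thesis using gt unfolding rr_def by auto
      qed
    qed
    have "contains k l P m n M"
      using core[OF e1 e2 i0 a1 a2 prr rra H2 H5 pq ysm ysp] .
    then show False using av by simp
  next
    assume d: "avoids 2 2 D2bar k l P"
    define rr where "rr i = (if i < i0 then r1 i else r2 i)" for i
    have prr: "part k m rr" unfolding part_def
    proof (intro conjI allI impI)
      show "rr 0 = 0" using pr1 i0 unfolding rr_def part_def by auto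
      show "rr k = m" using pr2 i0 unfolding rr_def part_def by auto
      fix i assume i: "i < k"
      show "rr i < rr (Suc i)"
      proof -
        consider "Suc i < i0" | "Suc i = i0" | "i0 \<le> i" by linarith
        then show ?thesis
        proof cases
          case 1 then show ?thesis using pr1 i unfolding rr_def part_def by auto
        next
          case 2 then show ?thesis using a1 a2 unfolding rr_def by auto
        next
          case 3 then show ?thesis using pr2 i unfolding rr_def part_def by auto
        qed
      qed
    qed
    have rra: "rr (i0 - 1) < a" "a \<le> rr i0" using a1 a2 i0 unfolding rr_def by auto
    have H2: "\<forall>i\<in>{1..k}. \<forall>j\<in>{1..l}. P i j \<longrightarrow> i \<noteq> i0 \<longrightarrow>
        (j \<le> p \<and> rr (i - 1) = r1 (i - 1) \<and> rr i = r1 i) \<or> (q \<le> j \<and> rr (i - 1) = r2 (i - 1) \<and> rr i = r2 i)"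
    proof (intro ballI impI)
      fix i j assume i: "i \<in> {1..k}" and j: "j \<in> {1..l}" and P: "P i j" and ne: "i \<noteq> i0"
      show "(j \<le> p \<and> rr (i - 1) = r1 (i - 1) \<and> rr i = r1 i) \<or> (q \<le> j \<and> rr (i - 1) = r2 (i - 1) \<and> rr i = r2 i)"
      proof (cases "i < i0")
        case True
        have "j \<le> p"
        proof (rule ccontr)
          assume "\<not> j \<le> p"
          then have "contains 2 2 D2bar k l P" using D2bar_of[of P i j i0 p k l] P Pp True i j i0 pq by auto
          then show False using d unfolding avoids_def by simp
        qed
        then show ?thesis using True unfolding rr_def by auto
      next
        case False
        then have gt: "i0 < i" using ne by auto
        have "q \<le> j"
        proof (rule ccontr)
          assume "\<not> q \<le> j"
          then have "contains 2 2 D2bar k l P" using D2bar_of[of P i0 q i j k l] P Pq gt i j i0 pq by auto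
          then show False using d unfolding avoids_def by simp
        qed
        then show ?thesis using gt unfolding rr_def by auto
      qed
    qed
    have "contains k l P m n M"
      using core[OF e1 e2 i0 a1 a2 prr rra H2 H5 pq ysm ysp] .
    then show False using av by simp
  qed
qed


lemma run_props:
  assumes "S \<in> zero_runs n M a"
  shows "S = {Min S..Max S} \<and> 1 \<le> Min S \<and> Min S \<le> Max S \<and> Max S \<le> n \<and> (\<forall>j\<in>S. \<not> M a j) \<and>
    (Min S = 1 \<or> M a (Min S - 1)) \<and> (Max S = n \<or> M a (Max S + 1))"
proof -
  obtain s t where S: "S = {s..t}" "1 \<le> s" "s \<le> t" "t \<le> n" "\<forall>j\<in>S. \<not> M a j"
    "s = 1 \<or> M a (s - 1)" "t = n \<or> M a (t + 1)"
    using assms unfolding zero_runs_def by blast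
  have "Min {s..t} = s" using S(3) by (intro Min_eqI) auto
  moreover have "Max {s..t} = t" using S(3) by (intro Max_eqI) auto
  ultimately have "Min S = s" "Max S = t" using S(1) by auto
  then show ?thesis using S by auto
qed

lemma run_inj: "inj_on Max (zero_runs n M a)"
proof (rule inj_onI)
  fix S S' assume S: "S \<in> zero_runs n M a" and S': "S' \<in> zero_runs n M a" and e: "Max S = Max S'"
  note p = run_props[OF S] and p' = run_props[OF S']
  have "Min S = Min S'"
  proof (rule ccontr)
    assume "Min S \<noteq> Min S'"
    then consider "Min S < Min S'" | "Min S' < Min S" by linarith
    then show False
    proof cases
      case 1
      then have "M a (Min S' - 1)" using p' p by auto
      moreover have "Min S' - 1 \<in> S"
      proof -
        have "Min S \<le> Min S' - 1" "Min S' - 1 \<le> Max S" using 1 p' e by linarith+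
        then have "Min S' - 1 \<in> {Min S..Max S}" by simp
        then show ?thesis using p by blast
      qed
      ultimately show False using p by blast
    next
      case 2
      then have "M a (Min S - 1)" using p' p by auto
      moreover have "Min S - 1 \<in> S'"
      proof -
        have "Min S' \<le> Min S - 1" "Min S - 1 \<le> Max S'" using 2 p e by linarith+
        then have "Min S - 1 \<in> {Min S'..Max S'}" by simp
        then show ?thesis using p' by blast
      qed
      ultimately show False using p' by blast
    qed
  qed
  then show "S = S'" using p p' e by (metis (no_types))
qed

lemma finite_runs: "finite (zero_runs n M a)"
proof -
  have "zero_runs n M a \<subseteq> Pow {1..n}" unfolding zero_runs_def by auto
  then show ?thesis by (rule finite_subset) simp
qed

lemma pigeon:
  assumes "finite A" "finite B" "g ` A \<subseteq> B" "card B * N < card A"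
  shows "\<exists>x\<in>B. N < card {y\<in>A. g y = x}"
proof (rule ccontr)
  assume "\<not> ?thesis"
  then have le: "\<forall>x\<in>B. card {y\<in>A. g y = x} \<le> N" by auto
  have "A = (\<Union>x\<in>B. {y\<in>A. g y = x})" using assms(3) by auto
  then have "card A \<le> (\<Sum>x\<in>B. card {y\<in>A. g y = x})" by (metis card_UN_le assms(2))
  also have "\<dots> \<le> card B * N" using sum_bounded_above[of B "\<lambda>x. card {y\<in>A. g y = x}" N] le by auto
  finally show False using assms(4) by linarith
qed


theorem lemma3p16:
  fixes k l :: nat and P :: "nat \<Rightarrow> nat \<Rightarrow> bool"
  assumes "avoids 2 2 D2 k l P \<or> avoids 2 2 D2bar k l P"
  shows "row_bounding k l P"
  unfolding row_bounding_def
proof (intro exI[of _ "k * l * l"] allI impI ballI)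
  fix m n M a assume cr: "critical k l P m n M" and a: "a \<in> {1..m}"
  have av: "\<not> contains k l P m n M" using cr unfolding critical_def avoids_def by auto
  define Z where "Z = zero_runs n M a"
  define good where "good S x r c \<longleftrightarrow> emb k l P m n (set_one M a (Max S)) r c \<and>
     r (fst x - 1) < a \<and> a \<le> r (fst x) \<and> c (snd x - 1) < Max S \<and> Max S \<le> c (snd x) \<and>
     P (fst x) (snd x) \<and> (\<forall>y. M a y \<longrightarrow> \<not> (c (snd x - 1) < y \<and> y \<le> c (snd x)))"
    for S :: "nat set" and x :: "nat \<times> nat" and r c
  have fZ: "finite Z" unfolding Z_def by (rule finite_runs)
  have ex: "\<forall>S\<in>Z. \<exists>x. x \<in> {1..k} \<times> {1..l} \<and> (\<exists>r c. good S x r c)"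
  proof
    fix S assume S: "S \<in> Z"
    note p = run_props[OF S[unfolded Z_def]]
    have "Max S \<in> S" using p by auto
    then have z: "\<not> M a (Max S)" using p by blast
    have b: "Max S \<in> {1..n}" using p by auto
    obtain r c i0 j0 where "emb k l P m n (set_one M a (Max S)) r c" "i0 \<in> {1..k}" "j0 \<in> {1..l}"
      "r (i0 - 1) < a" "a \<le> r i0" "c (j0 - 1) < Max S" "Max S \<le> c j0" "P i0 j0"
      "\<forall>y. M a y \<longrightarrow> \<not> (c (j0 - 1) < y \<and> y \<le> c j0)"
      using flip_cell[OF cr a b z] by blast
    then show "\<exists>x. x \<in> {1..k} \<times> {1..l} \<and> (\<exists>r c. good S x r c)"
      unfolding good_def by (intro exI[of _ "(i0, j0)"]) auto
  qed
  then obtain g where g: "\<forall>S\<in>Z. g S \<in> {1..k} \<times> {1..l} \<and> (\<exists>r c. good S (g S) r c)"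
    by metis
  show "row_complexity n M a \<le> k * l * l"
  proof (rule ccontr)
    assume "\<not> row_complexity n M a \<le> k * l * l"
    then have big: "card ({1..k} \<times> {1..l}) * l < card Z"
      unfolding row_complexity_def Z_def by (simp add: card_cartesian_product)
    obtain x0 where x0: "x0 \<in> {1..k} \<times> {1..l}" and T: "l < card {S\<in>Z. g S = x0}"
      using pigeon[OF fZ _ _ big, of g] g by blast
    define T where "T = {S\<in>Z. g S = x0}"
    have fT: "finite T" and TZ: "T \<subseteq> Z" using fZ unfolding T_def by auto
    have cT: "l < card T" using T unfolding T_def by simp
    then have Tne: "T \<noteq> {}" by auto
    define bv where "bv = Max (Max ` T)"
    define bu where "bu = Min (Max ` T)"
    have "bv \<in> Max ` T" "bu \<in> Max ` T" unfolding bv_def bu_def using fT Tne by auto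
    then obtain Sv Su where Sv: "Sv \<in> T" "Max Sv = bv" and Su: "Su \<in> T" "Max Su = bu" by auto
    have inj: "inj_on Max Z" unfolding Z_def by (rule run_inj)
    define Y where "Y = (\<lambda>S. Max S + 1) ` (T - {Sv})"
    have injY: "inj_on (\<lambda>S. Max S + 1) (T - {Sv})"
      using inj_on_subset[OF inj, of "T - {Sv}"] TZ unfolding inj_on_def by auto
    have cY: "card Y = card T - 1" unfolding Y_def using card_image[OF injY] Sv fT by simp
    have fY: "finite Y" unfolding Y_def using fT by simp
    have lY: "l \<le> card Y" using cY cT by linarith
    have zv: "\<not> M a bv"
    proof -
      note p = run_props[of Sv n M a] 
      have "Sv \<in> zero_runs n M a" using Sv TZ unfolding Z_def by auto
      then show ?thesis using run_props[of Sv n M a] Sv by auto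
    qed
    have bvn: "bv \<le> n"
    proof -
      have "Sv \<in> zero_runs n M a" using Sv TZ unfolding Z_def by auto
      then show ?thesis using run_props[of Sv n M a] Sv by auto
    qed
    have Yp: "\<forall>y\<in>Y. M a y \<and> bu < y \<and> y < bv"
    proof
      fix y assume "y \<in> Y"
      then obtain S where S: "S \<in> T" "S \<noteq> Sv" "y = Max S + 1" unfolding Y_def by auto
      have SZ: "S \<in> zero_runs n M a" using S TZ unfolding Z_def by auto
      note p = run_props[OF SZ]
      have "Max S \<le> bv" unfolding bv_def using fT S by auto
      moreover have "Max S \<noteq> bv" using inj S Sv TZ unfolding inj_on_def by auto
      ultimately have lt: "Max S < bv" by simp
      then have My: "M a y" using p S bvn by auto
      have "bu \<le> Max S" unfolding bu_def using fT S by auto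
      moreover have "y \<noteq> bv" using My zv by auto
      ultimately show "M a y \<and> bu < y \<and> y < bv" using lt My S by auto
    qed
    obtain r1 c1 where G1: "good Su x0 r1 c1" using g Su TZ unfolding T_def by auto
    obtain r2 c2 where G2: "good Sv x0 r2 c2" using g Sv TZ unfolding T_def by auto
    have x0': "fst x0 \<in> {1..k}" "snd x0 \<in> {1..l}" using x0 by auto
    show False
      using pair_contra[OF av assms _ _ x0', of a bu r1 c1 bv r2 c2 Y] G1 G2 Su Sv fY lY Yp
      unfolding good_def by auto
  qed
qed

end
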